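(* If $p=1/2$, then for every $t\ge0$, $$\mathbb{P}(X_t=O)=\sum_{x\in\mathcal{U}_0}\mathbb{P}(X_{t/2}=x)^2.$$
   Context: The simple exclusion process on $\mathbb{Z}$ with parameter $p\in(0,1)$: each site is occupied by at most one particle; each particle attempts to jump one site to the right at rate $p$ and one site to the left at rate $1-p$, an attempt succeeding iff the target site is empty. $O$ is the configuration with every negative site occupied and every non-negative site empty; $\mathcal{U}_0$ is the set of configurations in which the number of particles in $[0,\infty)$ is finite and equal to the number of holes in $(-\infty,0)$ (the set of states reachable from $O$). $\mathbb{P}$ is the law of the process started from $O$, $X_t$ the state at time $t$. *)

theory Defs
  imports "HOL-Analysis.Analysis"
begin

text \<open>Configurations of the simple exclusion process on the integers:
  a configuration maps a site to True iff it is occupied.\<close>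
type_synonym config = "int \<Rightarrow> bool"

definition O_cfg :: config where
  "O_cfg = (\<lambda>i. i < 0)"

definition U0 :: "config set" where
  "U0 = {\<eta>. finite {i. 0 \<le> i \<and> \<eta> i} \<and> finite {i. i < 0 \<and> \<not> \<eta> i} \<and>
             card {i. 0 \<le> i \<and> \<eta> i} = card {i. i < 0 \<and> \<not> \<eta> i}}"

definition sep_rate :: "real \<Rightarrow> config \<Rightarrow> config \<Rightarrow> real" where
  "sep_rate p \<eta> \<eta>' =
     (if \<exists>i. \<eta> i \<and> \<not> \<eta> (i + 1) \<and> \<eta>' = \<eta>(i := False, i + 1 := True) then p else 0)
   + (if \<exists>i. \<eta> i \<and> \<not> \<eta> (i - 1) \<and> \<eta>' = \<eta>(i := False, i - 1 := True) then 1 - p else 0)"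

text \<open>Total exit rate of a configuration (finite for configurations in U0).\<close>
definition sep_exit :: "real \<Rightarrow> config \<Rightarrow> real" where
  "sep_exit p \<eta> = p * real (card {i. \<eta> i \<and> \<not> \<eta> (i + 1)})
                 + (1 - p) * real (card {i. \<eta> i \<and> \<not> \<eta> (i - 1)})"

text \<open>Path weight: probability that the continuous-time chain, started at the head
  of the list, visits exactly the listed states in this order by time t and is in the
  last one at time t.\<close>
primrec path_weight :: "real \<Rightarrow> config list \<Rightarrow> real \<Rightarrow> real" where
  "path_weight p [] = (\<lambda>t. 0)"
| "path_weight p (x # xs) =
     (case xs of
        [] \<Rightarrow> (\<lambda>t. exp (- sep_exit p x * t))
      | y # ys \<Rightarrow> (\<lambda>t. sep_rate p x y *
                      integral {0..t} (\<lambda>s. exp (- sep_exit p x * s) * path_weight p xs (t - s))))"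

text \<open>Transition probability P(X_t = y | X_0 = x) of the (minimal) continuous-time
  Markov chain with the above rates: sum of the weights of all finite jump paths
  from x to y.\<close>
definition sep_trans :: "real \<Rightarrow> real \<Rightarrow> config \<Rightarrow> config \<Rightarrow> real" where
  "sep_trans p t x y =
     (\<Sum>\<^sub>\<infinity> xs \<in> {xs. xs \<noteq> [] \<and> hd xs = x \<and> last xs = y}. path_weight p xs t)"

definition sep_prob :: "real \<Rightarrow> real \<Rightarrow> config \<Rightarrow> real" where
  "sep_prob p t y = sep_trans p t O_cfg y"

end

theory Submission
  imports Defs
begin


primrec conv :: "real list \<Rightarrow> real \<Rightarrow> real" where
  "conv [] = (\<lambda>t. 0)"
| "conv (a # as) =
     (case as of
        [] \<Rightarrow> (\<lambda>t. exp (- a * t))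
      | b # bs \<Rightarrow> (\<lambda>t. integral {0..t} (\<lambda>s. exp (- a * s) * conv as (t - s))))"

lemma conv_single[simp]: "conv [a] t = exp (- a * t)" by simp

lemma conv_cons2: "conv (a # b # bs) t = integral {0..t} (\<lambda>s. exp (- a * s) * conv (b # bs) (t - s))"
  by simp

declare conv.simps(2)[simp del]
declare conv_cons2[simp]

lemma deriv_cong_val: "(f has_real_derivative D) F \<Longrightarrow> D = D' \<Longrightarrow> (f has_real_derivative D') F"
  by simp

lemma conv_0: "conv cs 0 = (if length cs = 1 then 1 else 0)"
proof (cases cs)
  case Nil then show ?thesis by simp
next
  case (Cons a m) then show ?thesis by (cases m) auto
qed

lemma reflect_int: "integral {0..t} (h::real\<Rightarrow>real) = integral {0..t} (\<lambda>r. h (t - r))"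
proof -
  have "integral {0..t} h = integral {-t..-0} (\<lambda>x. h (-x))"
    using Henstock_Kurzweil_Integration.integral_reflect_real[of t 0 h] by simp
  also have "\<dots> = integral {0-t..t-t} (\<lambda>x. (\<lambda>r. h (t - r)) (x + t))" by simp
  also have "\<dots> = integral {0..t} (\<lambda>r. h (t - r))"
    by (rule integral_shift_real_ivl)
  finally show ?thesis .
qed

lemma conv_G: "conv (a # b # bs) t = exp (- a * t) * integral {0..t} (\<lambda>r. exp (a * r) * conv (b # bs) r)"
proof -
  have "conv (a # b # bs) t = integral {0..t} (\<lambda>r. exp (- a * (t - r)) * conv (b # bs) (t - (t - r)))"
    by (simp only: conv_cons2) (rule reflect_int)
  also have "\<dots> = integral {0..t} (\<lambda>r. exp (- a * t) * (exp (a * r) * conv (b # bs) r))"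
  proof (rule integral_cong)
    fix r
    have "exp (- a * (t - r)) = exp (- a * t) * exp (a * r)"
      by (simp add: algebra_simps flip: exp_add)
    then show "exp (- a * (t - r)) * conv (b # bs) (t - (t - r)) = exp (- a * t) * (exp (a * r) * conv (b # bs) r)"
      by simp
  qed
  also have "\<dots> = exp (- a * t) * integral {0..t} (\<lambda>r. exp (a * r) * conv (b # bs) r)"
    by (rule integral_mult_right)
  finally show ?thesis .
qed

lemma ode_uniq:
  fixes V :: "real \<Rightarrow> real"
  assumes d: "\<And>t. 0 \<le> t \<Longrightarrow> t \<le> T \<Longrightarrow> (V has_real_derivative (- a * V t)) (at t within {0..T})"
    and v0: "V 0 = 0" and t: "0 \<le> t" "t \<le> T"
  shows "V t = 0"
proof -
  have "\<And>x. x \<in> {0..T} \<Longrightarrow> ((\<lambda>t. exp (a * t) * V t) has_real_derivative 0) (at x within {0..T})"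
  proof -
    fix x assume x: "x \<in> {0..T}"
    have "((\<lambda>t. exp (a * t) * V t) has_real_derivative (exp (a * x) * a) * V x + exp (a * x) * (- a * V x)) (at x within {0..T})"
    proof (rule deriv_cong_val[OF DERIV_mult'])
      show "((\<lambda>t. exp (a * t)) has_real_derivative exp (a * x) * a) (at x within {0..T})"
        by (auto intro!: derivative_eq_intros)
      show "(V has_real_derivative - a * V x) (at x within {0..T})" using d x by auto
    qed simp
    then show "((\<lambda>t. exp (a * t) * V t) has_real_derivative 0) (at x within {0..T})"
      by (simp add: algebra_simps)
  qed
  then obtain c where c: "\<forall>x\<in>{0..T}. exp (a * x) * V x = c"
    using has_field_derivative_zero_constant[of "{0..T}"] by blast
  have "exp (a * 0) * V 0 = c" using c[rule_format, of 0] t by simp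
  then have c0: "c = 0" using v0 by simp
  have "exp (a * t) * V t = c" using c t by simp
  then show ?thesis using c0 by simp
qed


lemma conv_HD:
  "\<And>a T t. 0 \<le> t \<Longrightarrow> t \<le> T \<Longrightarrow>
    (conv (a # m) has_real_derivative (- a * conv (a # m) t + conv m t)) (at t within {0..T})"
proof (induction m)
  case Nil
  show ?case
    by (rule DERIV_subset[where s=UNIV]) (auto intro!: derivative_eq_intros)
next
  case (Cons b m)
  note IH = Cons.IH
  have cont: "continuous_on {0..T} (conv (b # m))"
    by (rule DERIV_continuous_on) (rule IH, auto)
  have cont2: "continuous_on {0..T} (\<lambda>r. exp (a * r) * conv (b # m) r)"
    by (intro continuous_intros cont)
  have e: "((\<lambda>t. exp (- a * t)) has_real_derivative (- a * exp (- a * t))) (at t within {0..T})"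
    by (rule DERIV_subset[where s=UNIV]) (auto intro!: derivative_eq_intros)
  have i: "((\<lambda>t. integral {0..t} (\<lambda>r. exp (a * r) * conv (b # m) r)) has_real_derivative
             exp (a * t) * conv (b # m) t) (at t within {0..T})"
    by (rule integral_has_real_derivative[OF cont2]) (use Cons.prems in auto)
  have "((\<lambda>t. exp (- a * t) * integral {0..t} (\<lambda>r. exp (a * r) * conv (b # m) r)) has_real_derivative
          (- a * conv (a # b # m) t + conv (b # m) t)) (at t within {0..T})"
  proof (rule deriv_cong_val[OF DERIV_mult'[OF e i]])
    have ee: "exp (- a * t) * (exp (a * t) * y) = y" for y
      by (simp add: mult.assoc[symmetric] flip: exp_add)
    show "exp (- a * t) * (exp (a * t) * conv (b # m) t) +
        - a * exp (- a * t) * integral {0..t} (\<lambda>r. exp (a * r) * conv (b # m) r) =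
        - a * conv (a # b # m) t + conv (b # m) t"
      unfolding ee conv_G[of a b m t] by (simp only: mult.assoc add.commute)
  qed
  then show ?case
  proof (rule has_field_derivative_transform_within[where d=1])
    show "t \<in> {0..T}" using Cons.prems by simp
    fix x assume "x \<in> {0..T}"
    show "exp (- a * x) * integral {0..x} (\<lambda>r. exp (a * r) * conv (b # m) r) = conv (a # b # m) x"
      by (rule conv_G[symmetric])
  qed simp
qed

lemma conv_cont: "continuous_on {0..T} (conv cs)"
proof (cases cs)
  case Nil then show ?thesis by simp
next
  case (Cons a m)
  show ?thesis unfolding Cons
    by (rule DERIV_continuous_on) (rule conv_HD, auto)
qed

lemma conv_TD:
  "\<And>b T t. 0 \<le> t \<Longrightarrow> t \<le> T \<Longrightarrow>
    (conv (m @ [b]) has_real_derivative (- b * conv (m @ [b]) t + conv m t)) (at t within {0..T})"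
proof (induction m)
  case Nil
  then show ?case using conv_HD[of t T b "[]"] by (simp only: append.simps(1))
next
  case (Cons a m)
  note IH = Cons.IH
  have dX: "\<And>s. 0 \<le> s \<Longrightarrow> s \<le> T \<Longrightarrow> (conv (a # m @ [b]) has_real_derivative
      (- a * conv (a # m @ [b]) s + conv (m @ [b]) s)) (at s within {0..T})"
    by (rule conv_HD)
  have dZ: "\<And>s. 0 \<le> s \<Longrightarrow> s \<le> T \<Longrightarrow> (conv (a # m) has_real_derivative
      (- a * conv (a # m) s + conv m s)) (at s within {0..T})"
    by (rule conv_HD)
  have dY: "\<And>s. 0 \<le> s \<Longrightarrow> s \<le> T \<Longrightarrow> (conv (m @ [b]) has_real_derivative
      (- b * conv (m @ [b]) s + conv m s)) (at s within {0..T})"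
    by (rule IH)
  have key: "(b - a) * conv (a # m @ [b]) s - conv (a # m) s + conv (m @ [b]) s = 0"
    if s: "0 \<le> s" "s \<le> T" for s
  proof (rule ode_uniq[where a=a and T=T, OF _ _ s])
    fix x assume x: "0 \<le> x" "x \<le> T"
    show "((\<lambda>s. (b - a) * conv (a # m @ [b]) s - conv (a # m) s + conv (m @ [b]) s) has_real_derivative
      - a * ((b - a) * conv (a # m @ [b]) x - conv (a # m) x + conv (m @ [b]) x)) (at x within {0..T})"
      by (rule deriv_cong_val[OF DERIV_add[OF DERIV_diff[OF DERIV_cmult[OF dX[OF x]] dZ[OF x]] dY[OF x]]])
         (simp add: algebra_simps)
  next
    show "(b - a) * conv (a # m @ [b]) 0 - conv (a # m) 0 + conv (m @ [b]) 0 = 0"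
      by (simp add: conv_0)
  qed
  show ?case
    using Cons.prems key[OF Cons.prems]
    by (auto intro!: deriv_cong_val[OF dX[OF Cons.prems]] simp: algebra_simps)
qed

lemma conv_split:
  assumes t: "0 \<le> t"
  shows "0 \<le> u \<Longrightarrow> conv cs (t + u) = (\<Sum>k<length cs. conv (take (Suc k) cs) t * conv (drop k cs) u)"
proof (induction cs arbitrary: u rule: rev_induct)
  case Nil then show ?case by simp
next
  case (snoc b m)
  define c where "c k = conv (take (Suc k) (m @ [b])) t" for k
  define R where "R v = (\<Sum>k<Suc (length m). c k * conv (drop k m @ [b]) v)" for v
  have rhs: "(\<Sum>k<length (m @ [b]). conv (take (Suc k) (m @ [b])) t * conv (drop k (m @ [b])) u) = R u"
    unfolding R_def c_def by (intro sum.cong) auto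
  have ck: "k < length m \<Longrightarrow> c k = conv (take (Suc k) m) t" for k
    unfolding c_def by simp
  have W: "conv (m @ [b]) (t + v) - R v = 0" if v: "0 \<le> v" "v \<le> u" for v
  proof (rule ode_uniq[where a=b and T=u, OF _ _ v])
    fix x assume x: "0 \<le> x" "x \<le> u"
    have dL0: "(conv (m @ [b]) has_real_derivative (- b * conv (m @ [b]) (t + x) + conv m (t + x)))
        (at ((\<lambda>v. t + v) x) within (\<lambda>v. t + v) ` {0..u})"
      by (rule DERIV_subset[OF conv_TD[of "t + x" "t + u"]]) (use x t in auto)
    have dL: "((\<lambda>v. conv (m @ [b]) (t + v)) has_real_derivative (- b * conv (m @ [b]) (t + x) + conv m (t + x)))
        (at x within {0..u})"
    proof -
      have g: "((\<lambda>v. t + v) has_real_derivative 1) (at x within {0..u})"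
        by (auto intro!: derivative_eq_intros)
      show ?thesis using DERIV_image_chain[OF dL0 g] by (simp add: o_def)
    qed
    have dR: "(R has_real_derivative (\<Sum>k<Suc (length m). c k * (- b * conv (drop k m @ [b]) x + conv (drop k m) x)))
        (at x within {0..u})"
      unfolding R_def by (intro DERIV_sum DERIV_cmult conv_TD x)
    have "(\<Sum>k<Suc (length m). c k * (- b * conv (drop k m @ [b]) x + conv (drop k m) x))
        = - b * R x + (\<Sum>k<Suc (length m). c k * conv (drop k m) x)"
      unfolding R_def sum_distrib_left sum.distrib[symmetric] by (intro sum.cong) (simp_all add: algebra_simps)
    also have "(\<Sum>k<Suc (length m). c k * conv (drop k m) x) = (\<Sum>k<length m. c k * conv (drop k m) x)"
      by simp
    also have "\<dots> = (\<Sum>k<length m. conv (take (Suc k) m) t * conv (drop k m) x)"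
      by (intro sum.cong) (auto simp: ck)
    also have "\<dots> = conv m (t + x)"
      using snoc.IH[OF x(1)] by simp
    finally have dRv: "(\<Sum>k<Suc (length m). c k * (- b * conv (drop k m @ [b]) x + conv (drop k m) x))
        = - b * R x + conv m (t + x)" .
    show "((\<lambda>v. conv (m @ [b]) (t + v) - R v) has_real_derivative - b * (conv (m @ [b]) (t + x) - R x))
        (at x within {0..u})"
      by (rule deriv_cong_val[OF DERIV_diff[OF dL dR]]) (unfold dRv, simp add: algebra_simps)
  next
    have "R 0 = (\<Sum>k<Suc (length m). c k * (if k = length m then 1 else 0))"
      unfolding R_def by (intro sum.cong) (auto simp: conv_0)
    also have "\<dots> = c (length m)" by (simp add: sum.If_cases)
    also have "\<dots> = conv (m @ [b]) t" by (simp add: c_def)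
    finally show "conv (m @ [b]) (t + 0) - R 0 = 0" by simp
  qed
  show ?case using W[of u] snoc.prems rhs by simp
qed

lemma conv_rev: "0 \<le> t \<Longrightarrow> conv (rev cs) t = conv cs t"
proof (induction cs arbitrary: t)
  case Nil then show ?case by simp
next
  case (Cons a m)
  have "conv (rev m @ [a]) t - conv (a # m) t = 0"
  proof (rule ode_uniq[where a=a and T=t, OF _ _ Cons.prems order_refl])
    fix x assume x: "0 \<le> x" "x \<le> t"
    show "((\<lambda>s. conv (rev m @ [a]) s - conv (a # m) s) has_real_derivative
        - a * (conv (rev m @ [a]) x - conv (a # m) x)) (at x within {0..t})"
      by (rule deriv_cong_val[OF DERIV_diff[OF conv_TD[OF x] conv_HD[OF x]]])
         (simp add: Cons.IH[OF x(1)] algebra_simps)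
  next
    show "conv (rev m @ [a]) 0 - conv (a # m) 0 = 0" by (simp add: conv_0)
  qed
  then show ?case by simp
qed

lemma conv_nonneg: "0 \<le> t \<Longrightarrow> 0 \<le> conv cs t"
proof (induction cs arbitrary: t)
  case Nil then show ?case by simp
next
  case (Cons a m)
  show ?case
  proof (cases m)
    case Nil then show ?thesis by simp
  next
    case Cons2: (Cons b bs)
    have "0 \<le> integral {0..t} (\<lambda>r. exp (a * r) * conv m r)"
    proof (rule integral_nonneg)
      show "(\<lambda>r. exp (a * r) * conv m r) integrable_on {0..t}"
        by (intro integrable_continuous_real continuous_intros conv_cont)
      show "\<And>x. x \<in> {0..t} \<Longrightarrow> 0 \<le> exp (a * x) * conv m x"
        using Cons.IH by auto
    qed
    then show ?thesis unfolding Cons2 conv_G[of a b bs t] by (simp add: Cons2)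
  qed
qed



fun rprod :: "real \<Rightarrow> config list \<Rightarrow> real" where
  "rprod p (x # y # ys) = sep_rate p x y * rprod p (y # ys)"
| "rprod p _ = 1"

lemma pw_cons2: "path_weight p (x # y # ys) t =
   sep_rate p x y * integral {0..t} (\<lambda>s. exp (- sep_exit p x * s) * path_weight p (y # ys) (t - s))"
  by simp

lemma pw_single: "path_weight p [x] t = exp (- sep_exit p x * t)" by simp

lemma pw_conv: "path_weight p xs t = rprod p xs * conv (map (sep_exit p) xs) t"
proof (induction xs arbitrary: t)
  case Nil then show ?case by simp
next
  case (Cons x xs)
  show ?case
  proof (cases xs)
    case Nil then show ?thesis by simp
  next
    case (Cons y ys)
    have "path_weight p (x # y # ys) t =
      sep_rate p x y * integral {0..t} (\<lambda>s. rprod p (y # ys) * (exp (- sep_exit p x * s) * conv (map (sep_exit p) (y # ys)) (t - s)))"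
      unfolding pw_cons2 Cons.IH[unfolded Cons] by (simp add: algebra_simps)
    also have "\<dots> = rprod p (x # y # ys) * conv (map (sep_exit p) (x # y # ys)) t"
      by (simp only: integral_mult_right) (simp add: conv_cons2)
    finally show ?thesis using Cons by simp
  qed
qed

lemma rprod_split: "k < length xs \<Longrightarrow> rprod p (take (Suc k) xs) * rprod p (drop k xs) = rprod p xs"
proof (induction xs arbitrary: k)
  case Nil then show ?case by simp
next
  case (Cons x xs)
  show ?case
  proof (cases k)
    case 0 then show ?thesis by simp
  next
    case (Suc k')
    with Cons.prems obtain y ys where xs: "xs = y # ys" by (cases xs) auto
    have "rprod p (take (Suc k') xs) * rprod p (drop k' xs) = rprod p xs"
      using Cons.IH Cons.prems Suc by simp
    then show ?thesis using Suc xs by (simp add: algebra_simps)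
  qed
qed

lemma pw_split:
  assumes "0 \<le> s"
  shows "path_weight p xs (s + s) =
    (\<Sum>k<length xs. path_weight p (take (Suc k) xs) s * path_weight p (drop k xs) s)"
proof -
  have "path_weight p xs (s + s) = rprod p xs *
      (\<Sum>k<length xs. conv (take (Suc k) (map (sep_exit p) xs)) s * conv (drop k (map (sep_exit p) xs)) s)"
    unfolding pw_conv using conv_split[OF assms assms] by simp
  also have "\<dots> = (\<Sum>k<length xs. path_weight p (take (Suc k) xs) s * path_weight p (drop k xs) s)"
    unfolding sum_distrib_left
  proof (intro sum.cong refl)
    fix k assume "k \<in> {..<length xs}"
    then have "rprod p xs = rprod p (take (Suc k) xs) * rprod p (drop k xs)"
      using rprod_split by simp
    then show "rprod p xs * (conv (take (Suc k) (map (sep_exit p) xs)) s * conv (drop k (map (sep_exit p) xs)) s)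
      = path_weight p (take (Suc k) xs) s * path_weight p (drop k xs) s"
      unfolding pw_conv by (simp add: take_map drop_map algebra_simps)
  qed
  finally show ?thesis .
qed

lemma rate_sym: "sep_rate (1/2) x y = sep_rate (1/2) y x"
proof -
  have 1: "(\<exists>i. x i \<and> \<not> x (i + 1) \<and> y = x(i := False, i + 1 := True)) \<longleftrightarrow>
           (\<exists>i. y i \<and> \<not> y (i - 1) \<and> x = y(i := False, i - 1 := True))" for x y :: config
  proof
    assume "\<exists>i. x i \<and> \<not> x (i + 1) \<and> y = x(i := False, i + 1 := True)"
    then obtain i where i: "x i" "\<not> x (i + 1)" "y = x(i := False, i + 1 := True)" by blast
    show "\<exists>i. y i \<and> \<not> y (i - 1) \<and> x = y(i := False, i - 1 := True)"
      by (rule exI[of _ "i + 1"]) (use i in \<open>auto simp: fun_eq_iff\<close>)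
  next
    assume "\<exists>i. y i \<and> \<not> y (i - 1) \<and> x = y(i := False, i - 1 := True)"
    then obtain i where i: "y i" "\<not> y (i - 1)" "x = y(i := False, i - 1 := True)" by blast
    show "\<exists>i. x i \<and> \<not> x (i + 1) \<and> y = x(i := False, i + 1 := True)"
      by (rule exI[of _ "i - 1"]) (use i in \<open>auto simp: fun_eq_iff\<close>)
  qed
  show ?thesis unfolding sep_rate_def using 1[of x y] 1[of y x] by auto
qed

lemma rprod_snoc: "rprod p (xs @ [y]) = (if xs = [] then 1 else rprod p xs * sep_rate p (last xs) y)"
proof (induction xs)
  case Nil then show ?case by simp
next
  case (Cons x xs)
  then show ?case by (cases xs) (auto simp: algebra_simps)
qed

lemma rprod_rev: "rprod (1/2) (rev xs) = rprod (1/2) xs"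
proof (induction xs)
  case Nil then show ?case by simp
next
  case (Cons x xs)
  show ?case
  proof (cases xs)
    case Nil then show ?thesis by simp
  next
    case (Cons y ys)
    have "rprod (1/2) (rev (x # xs)) = rprod (1/2) (rev xs) * sep_rate (1/2) (last (rev xs)) x"
      using rprod_snoc[of "1/2" "rev xs" x] \<open>xs = y # ys\<close> by (simp only: rev.simps(2)) simp
    also have "\<dots> = rprod (1/2) xs * sep_rate (1/2) x y"
      using Cons.IH Cons by (simp add: last_rev rate_sym)
    finally show ?thesis using Cons by simp
  qed
qed

lemma pw_rev: "0 \<le> t \<Longrightarrow> path_weight (1/2) (rev xs) t = path_weight (1/2) xs t"
  unfolding pw_conv rprod_rev by (simp add: rev_map[symmetric] conv_rev)

lemma rate_nonneg: "0 \<le> p \<Longrightarrow> p \<le> 1 \<Longrightarrow> 0 \<le> sep_rate p x y"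
  unfolding sep_rate_def by auto

lemma rprod_nonneg: "0 \<le> p \<Longrightarrow> p \<le> 1 \<Longrightarrow> 0 \<le> rprod p xs"
  by (induction p xs rule: rprod.induct) (auto intro!: mult_nonneg_nonneg rate_nonneg)

lemma pw_nonneg: "0 \<le> p \<Longrightarrow> p \<le> 1 \<Longrightarrow> 0 \<le> t \<Longrightarrow> 0 \<le> path_weight p xs t"
  unfolding pw_conv by (intro mult_nonneg_nonneg rprod_nonneg conv_nonneg)



definition Pset :: "config \<Rightarrow> int set" where "Pset \<eta> = {i. 0 \<le> i \<and> \<eta> i}"
definition Hset :: "config \<Rightarrow> int set" where "Hset \<eta> = {i. i < 0 \<and> \<not> \<eta> i}"

lemma U0_alt: "\<eta> \<in> U0 \<longleftrightarrow> finite (Pset \<eta>) \<and> finite (Hset \<eta>) \<and> card (Pset \<eta>) = card (Hset \<eta>)"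
  unfolding U0_def Pset_def Hset_def by simp

lemma count_lemma:
  assumes "finite S" "Pset \<eta> \<subseteq> S" "Hset \<eta> \<subseteq> S"
  shows "int (card (Pset \<eta>)) - int (card (Hset \<eta>)) = (\<Sum>k\<in>S. of_bool (\<eta> k) - of_bool (k < 0))"
proof -
  have "(\<Sum>k\<in>S. of_bool (\<eta> k) - of_bool (k < 0)) = (\<Sum>k\<in>S. of_bool (k \<in> Pset \<eta>) - (of_bool (k \<in> Hset \<eta>) :: int))"
    by (intro sum.cong) (auto simp: Pset_def Hset_def)
  also have "\<dots> = (\<Sum>k\<in>S. of_bool (k \<in> Pset \<eta>)) - (\<Sum>k\<in>S. (of_bool (k \<in> Hset \<eta>) :: int))"
    by (rule sum_subtractf)
  also have "\<dots> = int (card (S \<inter> {k. k \<in> Pset \<eta>})) - int (card (S \<inter> {k. k \<in> Hset \<eta>}))"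
    using assms(1) by (simp add: sum_of_bool_eq)
  also have "S \<inter> {k. k \<in> Pset \<eta>} = Pset \<eta>" using assms by auto
  also have "S \<inter> {k. k \<in> Hset \<eta>} = Hset \<eta>" using assms by auto
  finally show ?thesis by simp
qed

lemma jump_U0:
  assumes x: "x \<in> U0" and xi: "x i" and xj: "\<not> x j"
  shows "x(i := False, j := True) \<in> U0"
proof -
  define y where "y = x(i := False, j := True)"
  have ij: "i \<noteq> j" using xi xj by auto
  have fx: "finite (Pset x)" "finite (Hset x)" "card (Pset x) = card (Hset x)" using x U0_alt by auto
  have Py: "Pset y \<subseteq> insert j (Pset x)" and Hy: "Hset y \<subseteq> insert i (Hset x)"
    by (auto simp: y_def Pset_def Hset_def)
  have fy: "finite (Pset y)" "finite (Hset y)"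
    using finite_subset[OF Py] finite_subset[OF Hy] fx by auto
  define S where "S = Pset x \<union> Hset x \<union> {i, j}"
  have fS: "finite S" using fx S_def by simp
  have iS: "i \<in> S" and jS: "j \<in> S" by (auto simp: S_def)
  have sub: "Pset x \<subseteq> S" "Hset x \<subseteq> S" "Pset y \<subseteq> S" "Hset y \<subseteq> S"
    using Py Hy by (auto simp: S_def)
  have sb: "(\<Sum>k\<in>S. (of_bool (y k) :: int)) = (\<Sum>k\<in>S. of_bool (x k))"
  proof -
    have r: "(\<Sum>k\<in>S. (of_bool (z k) :: int)) = of_bool (z i) + (of_bool (z j) + (\<Sum>k\<in>S - {i} - {j}. of_bool (z k)))" for z
    proof -
      have "(\<Sum>k\<in>S. (of_bool (z k) :: int)) = of_bool (z i) + (\<Sum>k\<in>S - {i}. of_bool (z k))"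
        by (rule sum.remove[OF fS iS])
      also have "(\<Sum>k\<in>S - {i}. (of_bool (z k) :: int)) = of_bool (z j) + (\<Sum>k\<in>S - {i} - {j}. of_bool (z k))"
        by (rule sum.remove) (use fS jS ij in auto)
      finally show ?thesis .
    qed
    have "(\<Sum>k\<in>S - {i} - {j}. (of_bool (y k) :: int)) = (\<Sum>k\<in>S - {i} - {j}. of_bool (x k))"
      by (intro sum.cong) (auto simp: y_def)
    then show ?thesis using r[of y] r[of x] xi xj ij by (simp add: y_def)
  qed
  have "int (card (Pset y)) - int (card (Hset y)) = int (card (Pset x)) - int (card (Hset x))"
    unfolding count_lemma[OF fS sub(1,2)] count_lemma[OF fS sub(3,4)] sum_subtractf sb ..
  then have "card (Pset y) = card (Hset y)" using fx by simp
  then show ?thesis using fy U0_alt y_def by auto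
qed

lemma rate_U0:
  assumes x: "x \<in> U0" and r: "sep_rate p x y \<noteq> 0"
  shows "y \<in> U0"
proof -
  have "(\<exists>i. x i \<and> \<not> x (i + 1) \<and> y = x(i := False, i + 1 := True)) \<or>
        (\<exists>i. x i \<and> \<not> x (i - 1) \<and> y = x(i := False, i - 1 := True))"
    using r unfolding sep_rate_def by (auto split: if_splits)
  then show ?thesis using jump_U0[OF x] by auto
qed

lemma O_U0: "O_cfg \<in> U0"
  unfolding U0_def O_cfg_def by simp

lemma path_U0: "xs \<noteq> [] \<Longrightarrow> hd xs \<in> U0 \<Longrightarrow> rprod p xs \<noteq> 0 \<Longrightarrow> last xs \<in> U0"
proof (induction p xs rule: rprod.induct)
  case (1 p x y ys)
  then have "y \<in> U0" using rate_U0 by auto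
  then show ?case using 1 by auto
qed auto

lemma pw_zero_out: "xs \<noteq> [] \<Longrightarrow> hd xs \<in> U0 \<Longrightarrow> last xs \<notin> U0 \<Longrightarrow> path_weight p xs t = 0"
  unfolding pw_conv using path_U0 by auto



lemma BR_fin: "x \<in> U0 \<Longrightarrow> finite {i. x i \<and> \<not> x (i + 1)}"
proof -
  assume x: "x \<in> U0"
  have "{i. x i \<and> \<not> x (i + 1)} \<subseteq> Pset x \<union> (\<lambda>k. k - 1) ` Hset x \<union> {-1}"
  proof
    fix i assume i: "i \<in> {i. x i \<and> \<not> x (i + 1)}"
    show "i \<in> Pset x \<union> (\<lambda>k. k - 1) ` Hset x \<union> {-1}"
    proof (cases "0 \<le> i")
      case True then show ?thesis using i by (auto simp: Pset_def)
    next
      case False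
      show ?thesis
      proof (cases "i = -1")
        case False
        then have "i + 1 \<in> Hset x" using \<open>\<not> 0 \<le> i\<close> i by (auto simp: Hset_def)
        then have "i \<in> (\<lambda>k. k - 1) ` Hset x" by (rule image_eqI[rotated]) simp
        then show ?thesis by blast
      qed simp
    qed
  qed
  moreover have "finite (Pset x \<union> (\<lambda>k. k - 1) ` Hset x \<union> {-1})" using x U0_alt by auto
  ultimately show ?thesis by (rule finite_subset)
qed

lemma BL_fin: "x \<in> U0 \<Longrightarrow> finite {i. x i \<and> \<not> x (i - 1)}"
proof -
  assume x: "x \<in> U0"
  have "{i. x i \<and> \<not> x (i - 1)} \<subseteq> Pset x \<union> (\<lambda>k. k + 1) ` Hset x"
  proof
    fix i assume i: "i \<in> {i. x i \<and> \<not> x (i - 1)}"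
    show "i \<in> Pset x \<union> (\<lambda>k. k + 1) ` Hset x"
    proof (cases "0 \<le> i")
      case True then show ?thesis using i by (auto simp: Pset_def)
    next
      case False
      then have "i - 1 \<in> Hset x" using i by (auto simp: Hset_def)
      then have "i \<in> (\<lambda>k. k + 1) ` Hset x" by (rule image_eqI[rotated]) simp
      then show ?thesis by blast
    qed
  qed
  moreover have "finite (Pset x \<union> (\<lambda>k. k + 1) ` Hset x)" using x U0_alt by auto
  ultimately show ?thesis by (rule finite_subset)
qed

lemma exit_bound:
  assumes p: "0 \<le> p" "p \<le> 1" and x: "x \<in> U0" and Y: "finite Y"
  shows "(\<Sum>y\<in>Y. sep_rate p x y) \<le> sep_exit p x"
proof -
  define BR where "BR = {i. x i \<and> \<not> x (i + 1)}"
  define BL where "BL = {i. x i \<and> \<not> x (i - 1)}"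
  define A where "A = (\<lambda>i. x(i := False, i + 1 := True)) ` BR"
  define B where "B = (\<lambda>i. x(i := False, i - 1 := True)) ` BL"
  have fBR: "finite BR" using BR_fin[OF x] BR_def by simp
  have fBL: "finite BL" using BL_fin[OF x] BL_def by simp
  have eq: "sep_rate p x y = p * of_bool (y \<in> A) + (1 - p) * of_bool (y \<in> B)" for y
    unfolding sep_rate_def A_def B_def BR_def BL_def by auto
  have "(\<Sum>y\<in>Y. sep_rate p x y) = p * (\<Sum>y\<in>Y. of_bool (y \<in> A)) + (1 - p) * (\<Sum>y\<in>Y. of_bool (y \<in> B))"
    unfolding eq by (simp add: sum.distrib sum_distrib_left)
  also have "\<dots> = p * real (card (Y \<inter> {y. y \<in> A})) + (1 - p) * real (card (Y \<inter> {y. y \<in> B}))"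
    using Y by (simp add: sum_of_bool_eq)
  also have "\<dots> \<le> p * real (card BR) + (1 - p) * real (card BL)"
  proof (intro add_mono mult_left_mono)
    have "card (Y \<inter> {y. y \<in> A}) \<le> card A" using fBR A_def by (intro card_mono) auto
    also have "\<dots> \<le> card BR" unfolding A_def by (rule card_image_le[OF fBR])
    finally show "real (card (Y \<inter> {y. y \<in> A})) \<le> real (card BR)" by simp
    have "card (Y \<inter> {y. y \<in> B}) \<le> card B" using fBL B_def by (intro card_mono) auto
    also have "\<dots> \<le> card BL" unfolding B_def by (rule card_image_le[OF fBL])
    finally show "real (card (Y \<inter> {y. y \<in> B})) \<le> real (card BL)" by simp
  qed (use p in auto)
  also have "\<dots> = sep_exit p x" unfolding sep_exit_def BR_def BL_def by simp
  finally show ?thesis .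
qed

lemma exp_int: "0 \<le> (t::real) \<Longrightarrow> (c::real) * integral {0..t} (\<lambda>s. exp (- c * s)) = 1 - exp (- c * t)"
proof -
  assume t: "0 \<le> t"
  have "((\<lambda>s. c * exp (- c * s)) has_integral (- exp (- c * t)) - (- exp (- c * 0))) {0..t}"
  proof (rule fundamental_theorem_of_calculus[OF t])
    fix x assume "x \<in> {0..t}"
    have "((\<lambda>s. - exp (- c * s)) has_real_derivative c * exp (- c * x)) (at x within {0..t})"
      by (rule deriv_cong_val) (auto intro!: derivative_eq_intros)
    then show "((\<lambda>s. - exp (- c * s)) has_vector_derivative c * exp (- c * x)) (at x within {0..t})"
      by (simp add: has_real_derivative_iff_has_vector_derivative)
  qed
  then have "integral {0..t} (\<lambda>s. c * exp (- c * s)) = 1 - exp (- c * t)"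
    by (intro integral_unique) simp
  then show ?thesis by (simp only: integral_mult_right)
qed

lemma cont_shift: "continuous_on {0..t} (\<lambda>s. exp (- c * s) * path_weight p zs (t - s))"
proof -
  have "continuous_on {0..t} (\<lambda>s. conv (map (sep_exit p) zs) (t - s))"
    by (rule continuous_on_compose2[OF conv_cont[of t]]) (auto intro!: continuous_intros)
  then show ?thesis unfolding pw_conv by (intro continuous_intros)
qed

lemma pw_cons_tl: "zs \<noteq> [] \<Longrightarrow> path_weight p (x # zs) t =
   sep_rate p x (hd zs) * integral {0..t} (\<lambda>s. exp (- sep_exit p x * s) * path_weight p zs (t - s))"
  by (cases zs) simp_all

lemma bound_N:
  assumes p: "0 \<le> p" "p \<le> 1"
  shows "\<forall>x t F. x \<in> U0 \<longrightarrow> 0 \<le> t \<longrightarrow> finite F \<longrightarrow> F \<subseteq> {xs. xs \<noteq> [] \<and> hd xs = x \<and> length xs \<le> N}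
     \<longrightarrow> (\<Sum>xs\<in>F. path_weight p xs t) \<le> 1"
proof (induction N)
  case 0
  show ?case
  proof (intro allI impI)
    fix x t and F :: "config list set" assume "F \<subseteq> {xs. xs \<noteq> [] \<and> hd xs = x \<and> length xs \<le> (0::nat)}"
    then have "F = {}" by auto
    then show "(\<Sum>xs\<in>F. path_weight p xs t) \<le> 1" by simp
  qed
next
  case (Suc N)
  show ?case
  proof (intro allI impI)
    fix x and t :: real and F :: "config list set"
    assume x: "x \<in> U0" and t: "0 \<le> t" and fF: "finite F"
      and FS: "F \<subseteq> {xs. xs \<noteq> [] \<and> hd xs = x \<and> length xs \<le> Suc N}"
    define w where "w xs = path_weight p xs t" for xs
    define a where "a = sep_exit p x"
    define I where "I = integral {0..t} (\<lambda>s. exp (- a * s))"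
    have wnn: "0 \<le> w xs" for xs unfolding w_def using pw_nonneg p t by simp
    have I0: "0 \<le> I" unfolding I_def
      by (rule integral_nonneg) (auto intro!: integrable_continuous_real continuous_intros)
    define F2 where "F2 = F - {[x]}"
    have split: "sum w F = sum w (F \<inter> {[x]}) + sum w F2"
      unfolding F2_def by (rule sum.Int_Diff[OF fF])
    have F1: "sum w (F \<inter> {[x]}) \<le> exp (- a * t)"
    proof -
      have "sum w (F \<inter> {[x]}) \<le> sum w {[x]}" by (rule sum_mono2) (auto simp: wnn)
      then show ?thesis by (simp add: w_def a_def)
    qed
    have F2x: "xs = x # tl xs" "tl xs \<noteq> []" "length (tl xs) \<le> N" if "xs \<in> F2" for xs
      using that FS unfolding F2_def by (cases xs; auto)+
    have fF2: "finite F2" using fF F2_def by simp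
    define Y where "Y = (\<lambda>xs. hd (tl xs)) ` F2"
    have fY: "finite Y" using fF2 Y_def by simp
    have grp: "sum w F2 = (\<Sum>y\<in>Y. sum w {xs \<in> F2. hd (tl xs) = y})"
      by (rule sum.group[symmetric]) (use fF2 fY Y_def in auto)
    have Sy: "sum w {xs \<in> F2. hd (tl xs) = y} \<le> sep_rate p x y * I" for y
    proof -
      define S where "S = {xs \<in> F2. hd (tl xs) = y}"
      have fS: "finite S" using fF2 S_def by simp
      have intg: "(\<lambda>s. exp (- a * s) * path_weight p (tl xs) (t - s)) integrable_on {0..t}" for xs
        by (rule integrable_continuous_real) (rule cont_shift)
      have "sum w S = (\<Sum>xs\<in>S. sep_rate p x y * integral {0..t} (\<lambda>s. exp (- a * s) * path_weight p (tl xs) (t - s)))"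
      proof (rule sum.cong[OF refl])
        fix xs assume xs: "xs \<in> S"
        then have a1: "xs \<in> F2" "hd (tl xs) = y" using S_def by auto
        show "w xs = sep_rate p x y * integral {0..t} (\<lambda>s. exp (- a * s) * path_weight p (tl xs) (t - s))"
        proof -
          have "w xs = path_weight p (x # tl xs) t" using F2x(1)[OF a1(1)] unfolding w_def by simp
          also have "\<dots> = sep_rate p x y * integral {0..t} (\<lambda>s. exp (- a * s) * path_weight p (tl xs) (t - s))"
            using pw_cons_tl[of "tl xs" p x t] F2x(2)[OF a1(1)] a1(2) unfolding a_def by simp
          finally show ?thesis .
        qed
      qed
      also have "\<dots> = sep_rate p x y * integral {0..t} (\<lambda>s. \<Sum>xs\<in>S. exp (- a * s) * path_weight p (tl xs) (t - s))"
        using integral_sum[OF fS, of "\<lambda>xs s. exp (- a * s) * path_weight p (tl xs) (t - s)" "{0..t}"] intg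
        by (simp add: sum_distrib_left)
      also have "\<dots> \<le> sep_rate p x y * I"
      proof (cases "sep_rate p x y = 0")
        case True then show ?thesis by simp
      next
        case False
        then have y: "y \<in> U0" using rate_U0[OF x] by blast
        show ?thesis
        proof (rule mult_left_mono[OF _ rate_nonneg[OF p]])
          show "integral {0..t} (\<lambda>s. \<Sum>xs\<in>S. exp (- a * s) * path_weight p (tl xs) (t - s)) \<le> I"
            unfolding I_def
          proof (rule integral_le)
            show "(\<lambda>s. \<Sum>xs\<in>S. exp (- a * s) * path_weight p (tl xs) (t - s)) integrable_on {0..t}"
              by (rule integrable_sum[OF fS]) (rule intg)
            show "(\<lambda>s. exp (- a * s)) integrable_on {0..t}"
              by (auto intro!: integrable_continuous_real continuous_intros)
            fix s assume s: "s \<in> {0..t}"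
            have inj: "inj_on tl S"
            proof (rule inj_onI)
              fix u v assume "u \<in> S" "v \<in> S" "tl u = tl v"
              then have "u \<in> F2" "v \<in> F2" "tl u = tl v" unfolding S_def by auto
              then show "u = v" using F2x(1)[of u] F2x(1)[of v] by simp
            qed
            have "(\<Sum>xs\<in>S. path_weight p (tl xs) (t - s)) = (\<Sum>zs\<in>tl ` S. path_weight p zs (t - s))"
              by (simp add: sum.reindex[OF inj] o_def)
            also have "\<dots> \<le> 1"
            proof (rule Suc.IH[rule_format, OF y])
              show "0 \<le> t - s" using s by simp
              show "finite (tl ` S)" using fS by simp
              show "tl ` S \<subseteq> {xs. xs \<noteq> [] \<and> hd xs = y \<and> length xs \<le> N}"
              proof
                fix zs assume "zs \<in> tl ` S"
                then obtain xs where xs: "xs \<in> S" "zs = tl xs" by blast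
                then have "xs \<in> F2" "hd (tl xs) = y" unfolding S_def by auto
                then show "zs \<in> {xs. xs \<noteq> [] \<and> hd xs = y \<and> length xs \<le> N}"
                  using F2x[of xs] xs by simp
              qed
            qed
            finally have le1: "(\<Sum>xs\<in>S. path_weight p (tl xs) (t - s)) \<le> 1" .
            have "(\<Sum>xs\<in>S. exp (- a * s) * path_weight p (tl xs) (t - s)) = exp (- a * s) * (\<Sum>xs\<in>S. path_weight p (tl xs) (t - s))"
              by (simp add: sum_distrib_left)
            also have "\<dots> \<le> exp (- a * s) * 1" by (rule mult_left_mono[OF le1]) simp
            finally show "(\<Sum>xs\<in>S. exp (- a * s) * path_weight p (tl xs) (t - s)) \<le> exp (- a * s)" by simp
          qed
        qed
      qed
      finally show ?thesis unfolding S_def .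
    qed
    have "sum w F2 \<le> (\<Sum>y\<in>Y. sep_rate p x y * I)"
      unfolding grp by (rule sum_mono) (rule Sy)
    also have "\<dots> = (\<Sum>y\<in>Y. sep_rate p x y) * I" by (simp add: sum_distrib_right)
    also have "\<dots> \<le> a * I" unfolding a_def by (rule mult_right_mono[OF exit_bound[OF p x fY] I0])
    also have "\<dots> = 1 - exp (- a * t)" unfolding I_def by (rule exp_int[OF t])
    finally have "sum w F2 \<le> 1 - exp (- a * t)" .
    then show "(\<Sum>xs\<in>F. path_weight p xs t) \<le> 1"
      using split F1 unfolding w_def[symmetric] by simp
  qed
qed

lemma bound:
  assumes p: "0 \<le> p" "p \<le> 1" and x: "x \<in> U0" and t: "0 \<le> t" and fF: "finite F"
    and FS: "F \<subseteq> {xs. xs \<noteq> [] \<and> hd xs = x}"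
  shows "(\<Sum>xs\<in>F. path_weight p xs t) \<le> 1"
proof -
  have "F \<subseteq> {xs. xs \<noteq> [] \<and> hd xs = x \<and> length xs \<le> Max (length ` F)}"
    using FS fF by (auto intro: Max_ge)
  then show ?thesis using bound_N[OF p] x t fF by blast
qed

lemma summable_from:
  assumes p: "0 \<le> p" "p \<le> 1" and x: "x \<in> U0" and t: "0 \<le> t"
  shows "(\<lambda>xs. path_weight p xs t) summable_on {xs. xs \<noteq> [] \<and> hd xs = x}"
proof (rule nonneg_bdd_above_summable_on)
  show "\<And>xs. xs \<in> {xs. xs \<noteq> [] \<and> hd xs = x} \<Longrightarrow> 0 \<le> path_weight p xs t"
    using pw_nonneg p t by simp
  show "bdd_above (sum (\<lambda>xs. path_weight p xs t) ` {F. F \<subseteq> {xs. xs \<noteq> [] \<and> hd xs = x} \<and> finite F})"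
    by (rule bdd_aboveI[of _ 1]) (use bound[OF p x t] in auto)
qed



definition Paths :: "config \<Rightarrow> config \<Rightarrow> config list set" where
  "Paths x y = {xs. xs \<noteq> [] \<and> hd xs = x \<and> last xs = y}"

lemma sep_prob_eq: "sep_prob p r y = infsum (\<lambda>xs. path_weight p xs r) (Paths O_cfg y)"
  unfolding sep_prob_def sep_trans_def Paths_def by simp

lemma hs_from:
  assumes r: "0 \<le> r"
  shows "((\<lambda>xs. path_weight (1/2) xs r) has_sum sep_prob (1/2) r y) (Paths O_cfg y)"
proof -
  have "(\<lambda>xs. path_weight (1/2) xs r) summable_on {xs. xs \<noteq> [] \<and> hd xs = O_cfg}"
    by (rule summable_from[OF _ _ O_U0 r]) auto
  then have "(\<lambda>xs. path_weight (1/2) xs r) summable_on (Paths O_cfg y)"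
    by (rule summable_on_subset_banach) (auto simp: Paths_def)
  then show ?thesis unfolding sep_prob_eq by (rule has_sum_infsum)
qed

lemma hs_rev:
  assumes r: "0 \<le> r"
  shows "((\<lambda>xs. path_weight (1/2) xs r) has_sum sep_prob (1/2) r y) (Paths y O_cfg)"
proof -
  have "((\<lambda>xs. path_weight (1/2) xs r) has_sum sep_prob (1/2) r y) (Paths y O_cfg) \<longleftrightarrow>
        ((\<lambda>xs. path_weight (1/2) xs r) has_sum sep_prob (1/2) r y) (Paths O_cfg y)"
    by (rule has_sum_reindex_bij_witness[where i=rev and j=rev])
       (auto simp: Paths_def pw_rev[OF r] hd_rev last_rev)
  then show ?thesis using hs_from[OF r] by simp
qed

lemma has_sum_prod_nonneg:
  fixes f g :: "_ \<Rightarrow> real"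
  assumes f: "(f has_sum a) A" and g: "(g has_sum b) B"
    and fn: "\<And>x. x \<in> A \<Longrightarrow> 0 \<le> f x" and gn: "\<And>y. y \<in> B \<Longrightarrow> 0 \<le> g y"
  shows "((\<lambda>(x, y). f x * g y) has_sum a * b) (A \<times> B)"
proof -
  have 1: "\<And>x. x \<in> A \<Longrightarrow> ((\<lambda>y. (\<lambda>(x, y). f x * g y) (x, y)) has_sum f x * b) B"
    using has_sum_cmult_right[OF g] by simp
  have 2: "((\<lambda>x. f x * b) has_sum a * b) A" by (rule has_sum_cmult_left[OF f])
  have 3: "(\<lambda>(x, y). f x * g y) summable_on Sigma A (\<lambda>_. B)"
    by (rule summable_on_SigmaI[OF 1 has_sum_imp_summable[OF 2]]) (auto intro!: mult_nonneg_nonneg fn gn)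
  show ?thesis using has_sum_SigmaI[OF 1 2 3] by simp
qed

lemma prob_out: "y \<notin> U0 \<Longrightarrow> sep_prob (1/2) r y = 0"
proof -
  assume y: "y \<notin> U0"
  have "\<And>xs. xs \<in> Paths O_cfg y \<Longrightarrow> path_weight (1/2) xs r = 0"
    using pw_zero_out O_U0 y by (auto simp: Paths_def)
  then show ?thesis unfolding sep_prob_eq by (simp add: infsum_0)
qed

theorem lemma3p1:
  fixes t :: real
  assumes "t \<ge> 0"
  shows "sep_prob (1/2) t O_cfg = (\<Sum>\<^sub>\<infinity> x \<in> U0. (sep_prob (1/2) (t/2) x)\<^sup>2)"
proof -
  define s where "s = t / 2"
  have s: "0 \<le> s" using assms s_def by simp
  have ts: "t = s + s" using s_def by simp
  define w where "w r xs = path_weight (1/2) xs r" for r xs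
  define L where "L = sep_prob (1/2) t O_cfg"
  define pr where "pr x = sep_prob (1/2) s x" for x
  define h where "h = (\<lambda>(xs, k). w s (take (Suc k) xs) * w s (drop k xs))"
  define SS where "SS = Sigma (Paths O_cfg O_cfg) (\<lambda>xs. {..<length xs})"
  define TT where "TT = Sigma (UNIV :: config set) (\<lambda>x. Paths O_cfg x \<times> Paths x O_cfg)"
  define H where "H = (\<lambda>(x :: config, ys, zs). w s ys * w s zs)"
  have wnn: "0 \<le> w r xs" if "0 \<le> r" for r xs
    unfolding w_def by (rule pw_nonneg) (use that in auto)
  have st1: "(w t has_sum L) (Paths O_cfg O_cfg)"
    unfolding w_def L_def using hs_from[OF assms] by simp
  have st2: "((\<lambda>k. h (xs, k)) has_sum w t xs) {..<length xs}" for xs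
  proof -
    have eq: "w t xs = (\<Sum>k<length xs. h (xs, k))"
      unfolding w_def h_def ts by (simp only: pw_split[OF s] case_prod_conv)
    show ?thesis by (rule has_sum_finiteI[OF finite_lessThan eq])
  qed
  have st3: "h summable_on SS"
    unfolding SS_def
    by (rule summable_on_SigmaI[OF st2 has_sum_imp_summable[OF st1]])
       (auto simp: h_def intro!: mult_nonneg_nonneg wnn s)
  have st4: "(h has_sum L) SS"
    unfolding SS_def by (rule has_sum_SigmaI[OF st2 st1 st3[unfolded SS_def]])
  have st5: "(H has_sum L) TT"
  proof -
    have "(h has_sum L) SS \<longleftrightarrow> (H has_sum L) TT"
    proof (rule has_sum_reindex_bij_witness[where j="\<lambda>(xs, k). (xs ! k, take (Suc k) xs, drop k xs)"
          and i="\<lambda>(x, ys, zs). (ys @ tl zs, length ys - 1)"])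
      fix a assume a: "a \<in> SS"
      obtain xs k where ak: "a = (xs, k)" by (cases a)
      have xs: "xs \<noteq> []" "hd xs = O_cfg" "last xs = O_cfg" and k: "k < length xs"
        using a ak by (auto simp: SS_def Paths_def)
      have lt: "last (take (Suc k) xs) = xs ! k"
        using take_hd_drop[OF k] hd_drop_conv_nth[OF k] by (metis last_snoc)
      show "(\<lambda>(x, ys, zs). (ys @ tl zs, length ys - 1)) ((\<lambda>(xs, k). (xs ! k, take (Suc k) xs, drop k xs)) a) = a"
      proof -
        have "tl (drop k xs) = drop (Suc k) xs" by (simp add: drop_Suc tl_drop)
        then show ?thesis using k by (simp add: ak)
      qed
      have "take (Suc k) xs \<in> Paths O_cfg (xs ! k)" using xs k lt by (simp add: Paths_def)
      moreover have "drop k xs \<in> Paths (xs ! k) O_cfg"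
        using xs k by (simp add: Paths_def hd_drop_conv_nth last_drop)
      ultimately show "(\<lambda>(xs, k). (xs ! k, take (Suc k) xs, drop k xs)) a \<in> TT"
        by (simp add: ak TT_def)
      show "H ((\<lambda>(xs, k). (xs ! k, take (Suc k) xs, drop k xs)) a) = h a"
        by (simp add: ak H_def h_def)
    next
      fix b assume b: "b \<in> TT"
      obtain x ys zs where bk: "b = (x, ys, zs)" by (cases b)
      have ys: "ys \<noteq> []" "hd ys = O_cfg" "last ys = x" and zs: "zs \<noteq> []" "hd zs = x" "last zs = O_cfg"
        using b bk by (auto simp: TT_def Paths_def)
      have n: "(ys @ tl zs) ! (length ys - 1) = x"
        using ys by (simp add: nth_append last_conv_nth)
      have dr: "drop (length ys - 1) (ys @ tl zs) = zs"
      proof -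
        have "drop (length ys - 1) ys = [last ys]" using ys(1)
          by (cases ys rule: rev_cases) simp_all
        moreover have "x # tl zs = zs" using zs by (metis list.collapse)
        ultimately show ?thesis using ys zs by (simp add: drop_append)
      qed
      show "(\<lambda>(xs, k). (xs ! k, take (Suc k) xs, drop k xs)) ((\<lambda>(x, ys, zs). (ys @ tl zs, length ys - 1)) b) = b"
        using ys n dr by (simp add: bk)
      have lst: "last (ys @ tl zs) = O_cfg"
      proof (cases "tl zs = []")
        case True
        then have "zs = [x]" using zs by (metis list.collapse)
        then show ?thesis using ys zs True by simp
      next
        case False
        then have "last (tl zs) = last zs" using zs(1) by (cases zs) auto
        then show ?thesis using False zs by simp
      qed
      have l0: "length ys > 0" using ys(1) by simp
      have lt: "length ys - 1 < length (ys @ tl zs)" unfolding length_append using l0 by linarith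
      have "ys @ tl zs \<in> Paths O_cfg O_cfg" using ys lst by (simp add: Paths_def)
      then show "(\<lambda>(x, ys, zs). (ys @ tl zs, length ys - 1)) b \<in> SS"
        using lt by (simp add: bk SS_def)
    qed simp
    then show ?thesis using st4 by simp
  qed
  have st6: "((\<lambda>yz. H (x, yz)) has_sum pr x * pr x) (Paths O_cfg x \<times> Paths x O_cfg)" for x
  proof -
    have "((\<lambda>(ys, zs). w s ys * w s zs) has_sum pr x * pr x) (Paths O_cfg x \<times> Paths x O_cfg)"
      by (rule has_sum_prod_nonneg) (use hs_from[OF s] hs_rev[OF s] wnn[OF s] in \<open>auto simp: w_def pr_def\<close>)
    then show ?thesis by (simp add: H_def case_prod_unfold)
  qed
  have st7: "((\<lambda>x. pr x * pr x) has_sum L) UNIV"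
    by (rule has_sum_Sigma'[OF st5[unfolded TT_def]]) (use st6 in \<open>simp add: case_prod_beta\<close>)
  have st8: "((\<lambda>x. (pr x)\<^sup>2) has_sum L) U0"
  proof -
    have "((\<lambda>x. pr x * pr x) has_sum L) UNIV \<longleftrightarrow> ((\<lambda>x. (pr x)\<^sup>2) has_sum L) U0"
      by (rule has_sum_cong_neutral) (auto simp: pr_def prob_out power2_eq_square)
    then show ?thesis using st7 by simp
  qed
  show ?thesis using infsumI[OF st8] by (simp add: L_def pr_def s_def)
qed


end
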